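(* The full subcategory $\mathbf{Top}_{d^{\ast}}$ of $\mathbf{Top}_0$ consisting of all $d^{\ast}$-spaces and continuous maps is not a reflective subcategory of $\mathbf{Top}_0$.
   Context: $\mathbf{Top}_0$ is the category of $T_0$-spaces and continuous maps. A full subcategory is reflective if its inclusion functor has a left adjoint. The specialization order of a space $X$ is given by $x\le y$ iff $x\in cl(\{y\})$; ${\uparrow}$ is taken with respect to it. A $T_0$-space $X$ is a $d^{\ast}$-space if for every directed $D\subseteq X$ (in the specialization order), every $x\in X$ and every nonempty open $U\subseteq X$, $\bigcap_{d\in D}{\uparrow}d\cap{\uparrow}x\subseteq U$ implies ${\uparrow}d\cap{\uparrow}x\subseteq U$ for some $d\in D$. *)

theory Defs
  imports "HOL-Analysis.Analysis"
begin

definition spec_le :: "'a topology \<Rightarrow> 'a \<Rightarrow> 'a \<Rightarrow> bool" where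
  "spec_le X x y \<longleftrightarrow> x \<in> topspace X \<and> y \<in> topspace X \<and> x \<in> X closure_of {y}"

definition spec_up :: "'a topology \<Rightarrow> 'a \<Rightarrow> 'a set" where
  "spec_up X a = {y \<in> topspace X. spec_le X a y}"

definition spec_directed :: "'a topology \<Rightarrow> 'a set \<Rightarrow> bool" where
  "spec_directed X D \<longleftrightarrow> D \<subseteq> topspace X \<and> D \<noteq> {} \<and>
     (\<forall>a\<in>D. \<forall>b\<in>D. \<exists>c\<in>D. spec_le X a c \<and> spec_le X b c)"

definition dstar_space :: "'a topology \<Rightarrow> bool" where
  "dstar_space X \<longleftrightarrow> t0_space X \<and>
     (\<forall>D x U. spec_directed X D \<and> x \<in> topspace X \<and> openin X U \<and> U \<noteq> {} \<and>
        (\<Inter>d\<in>D. spec_up X d) \<inter> spec_up X x \<subseteq> U \<longrightarrow>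
        (\<exists>d\<in>D. spec_up X d \<inter> spec_up X x \<subseteq> U))"

text \<open>(R, eta) is a reflection of X into the d*-spaces, where the universal property is
  tested against all d*-spaces Y whose points have type 'c.\<close>
definition dstar_reflection :: "'c itself \<Rightarrow> 'a topology \<Rightarrow> 'b topology \<Rightarrow> ('a \<Rightarrow> 'b) \<Rightarrow> bool" where
  "dstar_reflection _ X R \<eta> \<longleftrightarrow> dstar_space R \<and> continuous_map X R \<eta> \<and>
     (\<forall>(Y::'c topology) f. dstar_space Y \<and> continuous_map X Y f \<longrightarrow>
        (\<exists>g. continuous_map R Y g \<and> (\<forall>x\<in>topspace X. g (\<eta> x) = f x) \<and>
           (\<forall>g'. continuous_map R Y g' \<and> (\<forall>x\<in>topspace X. g' (\<eta> x) = f x) \<longrightarrow>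
              (\<forall>r\<in>topspace R. g' r = g r))))"

end

theory Submission
  imports Defs
begin

definition encX :: "nat \<Rightarrow> bool \<Rightarrow> nat set set" where
  "encX n c = (if c then {{n},{}} else {{n}})"

lemma encX_inj[simp]: "encX n c = encX m d \<longleftrightarrow> n = m \<and> c = d"
  unfolding encX_def by (cases c; cases d; auto simp: insert_eq_iff doubleton_eq_iff)

definition SX :: "nat set set set" where "SX = {encX n c | n c. True}"

definition openX :: "nat set set set \<Rightarrow> bool" where
  "openX U \<longleftrightarrow> U \<subseteq> SX \<and> (\<forall>n m c. encX n c \<in> U \<longrightarrow> n \<le> m \<longrightarrow> encX m c \<in> U)"

lemma istop_X: "istopology openX"
  unfolding istopology_def openX_def by blast

definition XX :: "nat set set topology" where "XX = topology openX"

lemma openin_XX: "openin XX U \<longleftrightarrow> openX U"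
  by (simp add: XX_def topology_inverse' istop_X)

lemma topspace_XX: "topspace XX = SX"
proof -
  have "openX SX" unfolding openX_def SX_def by blast
  then show ?thesis unfolding topspace_def openin_XX openX_def by blast
qed

definition upX :: "nat \<Rightarrow> bool \<Rightarrow> nat set set set" where
  "upX n c = {encX k c | k. n \<le> k}"

lemma open_upX: "openin XX (upX n c)"
  unfolding openin_XX openX_def upX_def SX_def by auto

lemma mem_upX[simp]: "encX k c \<in> upX n d \<longleftrightarrow> n \<le> k \<and> c = d"
  unfolding upX_def by auto

lemma t0_XX: "t0_space XX"
  unfolding t0_space_def topspace_XX
proof (intro ballI impI)
  fix x y assume "x \<in> SX" "y \<in> SX" "x \<noteq> y"
  then obtain n c m d where x: "x = encX n c" and y: "y = encX m d" unfolding SX_def by blast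
  show "\<exists>U. openin XX U \<and> (x \<notin> U) = (y \<in> U)"
  proof (cases "c = d")
    case False
    have "x \<in> upX 0 c" "y \<notin> upX 0 c" using False x y by simp_all
    then show ?thesis using open_upX[of 0 c] by blast
  next
    case True
    then have "n \<noteq> m" using x y \<open>x \<noteq> y\<close> by auto
    show ?thesis
    proof (cases "n < m")
      case True
      have "x \<notin> upX m c" "y \<in> upX m c" using True \<open>c = d\<close> x y by simp_all
      then show ?thesis using open_upX[of m c] by blast
    next
      case False
      have "x \<in> upX n c" "y \<notin> upX n c" using False \<open>n \<noteq> m\<close> \<open>c = d\<close> x y by simp_all
      then show ?thesis using open_upX[of n c] by blast
    qed
  qed
qed

lemma spec_le_XX:
  assumes "n \<le> m" shows "spec_le XX (encX n c) (encX m c)"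
proof -
  have t: "encX k c \<in> topspace XX" for k unfolding topspace_XX SX_def by blast
  have "encX n c \<in> XX closure_of {encX m c}"
    unfolding in_closure_of
  proof (intro conjI allI impI t)
    fix T assume "encX n c \<in> T \<and> openin XX T"
    then have "encX m c \<in> T" using assms unfolding openin_XX openX_def by blast
    then show "\<exists>y. y \<in> {encX m c} \<and> y \<in> T" by blast
  qed
  then show ?thesis unfolding spec_le_def using t by blast
qed

definition tN :: "nat \<Rightarrow> ('b + nat set set) set" where "tN k = {Inr {{k}}}"

lemma tN_inj[simp]: "tN k = tN m \<longleftrightarrow> k = m"
  unfolding tN_def by auto

definition openY :: "('b + nat set set) set set \<Rightarrow> bool" where
  "openY V \<longleftrightarrow> V \<subseteq> range tN \<and> (\<forall>k m. tN k \<in> V \<longrightarrow> k \<le> m \<longrightarrow> tN m \<in> V)"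

lemma istop_Y: "istopology (openY :: ('b + nat set set) set set \<Rightarrow> bool)"
  unfolding istopology_def
proof (intro conjI allI impI)
  fix S T :: "('b + nat set set) set set" assume S: "openY S" and T: "openY T"
  have "S \<inter> T \<subseteq> range tN" using S unfolding openY_def by (intro le_infI1) (erule conjunct1)
  moreover have "\<forall>k m. tN k \<in> S \<inter> T \<longrightarrow> k \<le> m \<longrightarrow> tN m \<in> S \<inter> T"
  proof (intro allI impI)
    fix k m assume "tN k \<in> S \<inter> T" "k \<le> m"
    then have "tN k \<in> S" "tN k \<in> T" by simp_all
    moreover have "\<forall>k m. tN k \<in> S \<longrightarrow> k \<le> m \<longrightarrow> tN m \<in> S" using S unfolding openY_def by (rule conjunct2)
    moreover have "\<forall>k m. tN k \<in> T \<longrightarrow> k \<le> m \<longrightarrow> tN m \<in> T" using T unfolding openY_def by (rule conjunct2)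
    ultimately show "tN m \<in> S \<inter> T" using \<open>k \<le> m\<close> by simp
  qed
  ultimately show "openY (S \<inter> T)" unfolding openY_def by (rule conjI)
next
  fix K :: "('b + nat set set) set set set" assume K: "\<forall>S\<in>K. openY S"
  have "\<Union>K \<subseteq> range tN"
  proof (rule Union_least)
    fix S assume "S \<in> K" then show "S \<subseteq> range tN" using K unfolding openY_def by simp
  qed
  moreover have "\<forall>k m. tN k \<in> \<Union>K \<longrightarrow> k \<le> m \<longrightarrow> tN m \<in> \<Union>K"
  proof (intro allI impI)
    fix k m assume "tN k \<in> \<Union>K" "k \<le> m"
    from \<open>tN k \<in> \<Union>K\<close> obtain S where S: "S \<in> K" "tN k \<in> S" by auto
    then have "openY S" using K by simp
    then have "tN m \<in> S" using S(2) \<open>k \<le> m\<close> unfolding openY_def by simp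
    then show "tN m \<in> \<Union>K" using S(1) by (rule UnionI[rotated])
  qed
  ultimately show "openY (\<Union>K)" unfolding openY_def by (rule conjI)
qed

definition YY :: "('b + nat set set) set topology" where "YY = topology openY"

lemma openin_YY: "openin YY U \<longleftrightarrow> openY U"
  by (simp add: YY_def topology_inverse' istop_Y)

lemma topspace_YY: "topspace YY = range tN"
proof
  have "openY (range tN)" unfolding openY_def by blast
  then have "openin YY (range tN)" by (simp add: openin_YY)
  then show "range tN \<subseteq> topspace YY" by (rule openin_subset)
  have "openY (topspace YY)" using openin_topspace openin_YY by blast
  then show "topspace YY \<subseteq> range tN" unfolding openY_def by blast
qed

definition upY :: "nat \<Rightarrow> ('b + nat set set) set set" where
  "upY n = {tN k | k. n \<le> k}"

lemma open_upY: "openin YY (upY n)"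
  unfolding openin_YY openY_def upY_def by auto

lemma mem_upY[simp]: "tN k \<in> upY n \<longleftrightarrow> n \<le> k"
  unfolding upY_def by auto

lemma spec_le_YY: "spec_le YY x y \<longleftrightarrow> (\<exists>k m. x = tN k \<and> y = tN m \<and> k \<le> m)"
proof
  assume a: "spec_le YY x y"
  then obtain k m where x: "x = tN k" and y: "y = tN m"
    unfolding spec_le_def topspace_YY by blast
  have "k \<le> m"
  proof (rule ccontr)
    assume "\<not> k \<le> m"
    then have "x \<in> upY k" "y \<notin> upY k" using x y by simp_all
    moreover have "x \<in> YY closure_of {y}" using a unfolding spec_le_def by blast
    ultimately show False using open_upY[of k] unfolding in_closure_of by blast
  qed
  then show "\<exists>k m. x = tN k \<and> y = tN m \<and> k \<le> m" using x y by blast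
next
  assume "\<exists>k m. x = tN k \<and> y = tN m \<and> k \<le> m"
  then obtain k m where x: "x = tN k" and y: "y = tN m" and km: "k \<le> m" by blast
  have t: "tN j \<in> topspace YY" for j unfolding topspace_YY by blast
  have "x \<in> YY closure_of {y}"
    unfolding in_closure_of
  proof (intro conjI allI impI)
    show "x \<in> topspace YY" using x t by simp
    fix T assume "x \<in> T \<and> openin YY T"
    then have "y \<in> T" using km x y unfolding openin_YY openY_def by blast
    then show "\<exists>z. z \<in> {y} \<and> z \<in> T" by blast
  qed
  then show "spec_le YY x y" unfolding spec_le_def using t x y by blast
qed

lemma t0_YY: "t0_space YY"
  unfolding t0_space_def topspace_YY
proof (intro ballI impI)
  fix x y assume "x \<in> range tN" "y \<in> range tN" "x \<noteq> y"
  then obtain n m where x: "x = tN n" and y: "y = tN m" by blast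
  have "n \<noteq> m" using x y \<open>x \<noteq> y\<close> by auto
  show "\<exists>U. openin YY U \<and> (x \<notin> U) = (y \<in> U)"
  proof (cases "n < m")
    case True
    have "x \<notin> upY m" "y \<in> upY m" using True x y by simp_all
    then show ?thesis using open_upY[of m] by blast
  next
    case False
    have "x \<in> upY n" "y \<notin> upY n" using False \<open>n \<noteq> m\<close> x y by simp_all
    then show ?thesis using open_upY[of n] by blast
  qed
qed

lemma dstar_YY: "dstar_space YY"
  unfolding dstar_space_def
proof (intro conjI t0_YY allI impI)
  fix D x U
  assume A: "spec_directed YY D \<and> x \<in> topspace YY \<and> openin YY U \<and> U \<noteq> {} \<and>
        (\<Inter>d\<in>D. spec_up YY d) \<inter> spec_up YY x \<subseteq> U"
  then have Dsub: "D \<subseteq> range tN" and Dne: "D \<noteq> {}" and oU: "openY U" and Une: "U \<noteq> {}"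
    and sub: "(\<Inter>d\<in>D. spec_up YY d) \<inter> spec_up YY x \<subseteq> U"
    unfolding spec_directed_def topspace_YY openin_YY by auto
  show "\<exists>d\<in>D. spec_up YY d \<inter> spec_up YY x \<subseteq> U"
  proof (cases "\<exists>y. \<forall>d\<in>D. spec_le YY d y")
    case True
    then obtain y where y: "\<forall>d\<in>D. spec_le YY d y" by blast
    define L where "L = {k. tN k \<in> D}"
    obtain m where ym: "y = tN m" using y Dne unfolding spec_le_YY by blast
    have Lb: "L \<subseteq> {..m}" using y ym unfolding L_def spec_le_YY by auto
    have fL: "finite L" using Lb finite_subset by blast
    have Lne: "L \<noteq> {}" using Dne Dsub unfolding L_def by blast
    define k0 where "k0 = Max L"
    have k0L: "k0 \<in> L" using fL Lne k0_def by simp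
    have k0max: "\<And>k. k \<in> L \<Longrightarrow> k \<le> k0" using fL k0_def by simp
    show ?thesis
    proof (intro bexI[of _ "tN k0"] subsetI)
      show "tN k0 \<in> D" using k0L L_def by simp
      fix r assume r: "r \<in> spec_up YY (tN k0) \<inter> spec_up YY x"
      have "r \<in> (\<Inter>d\<in>D. spec_up YY d)"
      proof
        fix d assume "d \<in> D"
        then obtain k where d: "d = tN k" "k \<in> L" using Dsub L_def by auto
        then show "r \<in> spec_up YY d" using r k0max[OF d(2)] unfolding spec_up_def spec_le_YY
          by fastforce
      qed
      then show "r \<in> U" using r sub by blast
    qed
  next
    case False
    obtain u where "u \<in> U" using Une by blast
    then obtain k where uk: "tN k \<in> U" using oU unfolding openY_def by blast
    obtain d where dD: "d \<in> D" and nd: "\<not> spec_le YY d (tN k)" using False by blast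
    obtain j where dj: "d = tN j" using dD Dsub by blast
    have kj: "k < j" using nd dj unfolding spec_le_YY by auto
    show ?thesis
    proof (intro bexI[OF _ dD] subsetI)
      fix r assume "r \<in> spec_up YY d \<inter> spec_up YY x"
      then obtain m where "r = tN m" "j \<le> m" unfolding spec_up_def spec_le_YY dj by auto
      then show "r \<in> U" using oU uk kj unfolding openY_def by auto
    qed
  qed
qed

lemma spec_le_discrete: "spec_le (discrete_topology S) x y \<longleftrightarrow> x \<in> S \<and> x = y"
  unfolding spec_le_def discrete_topology_closure_of by auto

lemma dstar_discrete: "dstar_space (discrete_topology S)"
  unfolding dstar_space_def
proof (intro conjI t0_space_discrete_topology allI impI)
  fix D x U
  assume A: "spec_directed (discrete_topology S) D \<and> x \<in> topspace (discrete_topology S) \<and>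
     openin (discrete_topology S) U \<and> U \<noteq> {} \<and>
     (\<Inter>d\<in>D. spec_up (discrete_topology S) d) \<inter> spec_up (discrete_topology S) x \<subseteq> U"
  then obtain d where dD: "d \<in> D" unfolding spec_directed_def by blast
  have eq: "\<And>d'. d' \<in> D \<Longrightarrow> d' = d" using A dD unfolding spec_directed_def spec_le_discrete
    by blast
  show "\<exists>d\<in>D. spec_up (discrete_topology S) d \<inter> spec_up (discrete_topology S) x \<subseteq> U"
    using A dD eq by (intro bexI[OF _ dD]) blast
qed

lemma spec_le_cont:
  assumes "continuous_map X Y f" "spec_le X x y"
  shows "spec_le Y (f x) (f y)"
proof -
  have "f x \<in> f ` (X closure_of {y})" using assms(2) unfolding spec_le_def by blast
  also have "\<dots> \<subseteq> Y closure_of {f y}" using continuous_map_image_closure_subset[OF assms(1), of "{y}"] by simp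
  moreover have "f x \<in> topspace Y" "f y \<in> topspace Y"
    using assms continuous_map_image_subset_topspace[OF assms(1)] unfolding spec_le_def by blast+
  ultimately show ?thesis unfolding spec_le_def by blast
qed

lemma spec_le_refl: "y \<in> topspace X \<Longrightarrow> spec_le X y y"
  unfolding spec_le_def using closure_of_subset[of "{y}" X] by auto

definition lvl :: "nat set set \<Rightarrow> nat" where "lvl z = (THE n. \<exists>c. z = encX n c)"
definition col :: "nat set set \<Rightarrow> bool" where "col z = (THE c. \<exists>n. z = encX n c)"

lemma lvl_enc[simp]: "lvl (encX n c) = n"
  unfolding lvl_def by (rule the_equality) auto
lemma col_enc[simp]: "col (encX n c) = c"
  unfolding col_def by (rule the_equality) auto

lemma cont_g1: "continuous_map XX YY (\<lambda>z. tN (lvl z))"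
  unfolding continuous_map topspace_XX topspace_YY
proof (intro conjI allI impI)
  show "(\<lambda>z. tN (lvl z)) ` SX \<subseteq> range tN" by auto
  fix V assume "openin YY V"
  then have V: "openY V" by (simp add: openin_YY)
  show "openin XX {x \<in> SX. tN (lvl x) \<in> V}"
    unfolding openin_XX openX_def using V unfolding openY_def SX_def by auto
qed

lemma cont_g2: "continuous_map XX (discrete_topology UNIV) (\<lambda>z. if col z then {} else UNIV)"
  unfolding continuous_map topspace_XX
proof (intro conjI allI impI)
  show "(\<lambda>z. if col z then {} else UNIV) ` SX \<subseteq> topspace (discrete_topology UNIV)" by simp
  fix V
  show "openin XX {x \<in> SX. (if col x then {} else UNIV) \<in> V}"
    unfolding openin_XX openX_def SX_def by auto
qed

theorem mainTheorem4:
  shows "\<exists>X :: nat set set topology. t0_space X \<and>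
     (\<forall>(R :: 'b topology) \<eta>. \<not> dstar_reflection TYPE(('b + nat set set) set) X R \<eta>)"
proof (intro exI[of _ XX] conjI t0_XX allI notI)
  fix R :: "'b topology" and \<eta>
  assume "dstar_reflection TYPE(('b + nat set set) set) XX R \<eta>"
  then have dR: "dstar_space R" and ce: "continuous_map XX R \<eta>"
    and univ: "\<And>(Y::('b + nat set set) set topology) f. dstar_space Y \<Longrightarrow> continuous_map XX Y f \<Longrightarrow>
        (\<exists>g. continuous_map R Y g \<and> (\<forall>x\<in>topspace XX. g (\<eta> x) = f x))"
    unfolding dstar_reflection_def by blast+
  obtain h1 :: "'b \<Rightarrow> ('b + nat set set) set" where h1c: "continuous_map R YY h1" and h1e: "\<forall>x\<in>topspace XX. h1 (\<eta> x) = tN (lvl x)"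
    using univ[OF dstar_YY cont_g1] by blast
  obtain h2 :: "'b \<Rightarrow> ('b + nat set set) set" where h2c: "continuous_map R (discrete_topology UNIV) h2"
    and h2e: "\<forall>x\<in>topspace XX. h2 (\<eta> x) = (if col x then {} else UNIV)"
    using univ[OF dstar_discrete cont_g2] by blast
  have inS: "\<And>n c. encX n c \<in> topspace XX" unfolding topspace_XX SX_def by blast
  have etaT: "\<And>n c. \<eta> (encX n c) \<in> topspace R"
    using continuous_map_image_subset_topspace[OF ce] inS by blast
  define D where "D = (\<lambda>n. \<eta> (encX n False)) ` UNIV"
  define U where "U = {r \<in> topspace R. h2 r \<in> {{}}}"
  have mono: "\<And>n m. n \<le> m \<Longrightarrow> spec_le R (\<eta> (encX n False)) (\<eta> (encX m False))"
    using spec_le_cont[OF ce spec_le_XX] by blast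
  have dirD: "spec_directed R D"
    unfolding spec_directed_def D_def
  proof (intro conjI)
    show "range (\<lambda>n. \<eta> (encX n False)) \<subseteq> topspace R" using etaT by blast
    show "range (\<lambda>n. \<eta> (encX n False)) \<noteq> {}" by blast
    show "\<forall>a\<in>range (\<lambda>n. \<eta> (encX n False)). \<forall>b\<in>range (\<lambda>n. \<eta> (encX n False)).
         \<exists>c\<in>range (\<lambda>n. \<eta> (encX n False)). spec_le R a c \<and> spec_le R b c"
    proof (intro ballI)
      fix a b assume "a \<in> range (\<lambda>n. \<eta> (encX n False))" "b \<in> range (\<lambda>n. \<eta> (encX n False))"
      then obtain i j where "a = \<eta> (encX i False)" "b = \<eta> (encX j False)" by blast
      then show "\<exists>c\<in>range (\<lambda>n. \<eta> (encX n False)). spec_le R a c \<and> spec_le R b c"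
        using mono[of i "max i j"] mono[of j "max i j"] by auto
    qed
  qed
  have oU: "openin R U" unfolding U_def
  proof -
    have "\<forall>V. openin R {x \<in> topspace R. h2 x \<in> V}" using h2c unfolding continuous_map by simp
    then show "openin R {r \<in> topspace R. h2 r \<in> {{}}}" by (rule spec)
  qed
  have Une: "U \<noteq> {}"
  proof -
    have "\<eta> (encX 0 True) \<in> U" unfolding U_def using etaT h2e inS by simp
    then show ?thesis by blast
  qed
  have empty: "(\<Inter>d\<in>D. spec_up R d) = {}"
  proof (rule ccontr)
    assume "(\<Inter>d\<in>D. spec_up R d) \<noteq> {}"
    then obtain r where r: "\<And>n. spec_le R (\<eta> (encX n False)) r" unfolding D_def spec_up_def by auto
    have H: "\<And>n. spec_le YY (tN n) (h1 r)"
      using spec_le_cont[OF h1c r] h1e inS by simp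
    then obtain m where hm: "h1 r = tN m" unfolding spec_le_YY by blast
    have "spec_le YY (tN (Suc m)) (h1 r)" by (rule H)
    then show False using hm unfolding spec_le_YY by auto
  qed
  have x: "\<eta> (encX 0 False) \<in> topspace R" using etaT by blast
  obtain d where dD: "d \<in> D" and dsub: "spec_up R d \<inter> spec_up R (\<eta> (encX 0 False)) \<subseteq> U"
    using dR dirD x oU Une empty unfolding dstar_space_def by blast
  obtain n where dn: "d = \<eta> (encX n False)" using dD D_def by blast
  have "d \<in> spec_up R d \<inter> spec_up R (\<eta> (encX 0 False))"
    unfolding spec_up_def dn using etaT spec_le_refl[OF etaT] mono[of 0 n] by simp
  then have "d \<in> U" using dsub by blast
  then show False unfolding U_def dn using h2e inS by simp
qed

end
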